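(* Let $\mathcal H$ be a real Hilbert space and $\hat H\colon\operatorname{dom}(\hat H)\subset\mathcal H\to\mathcal H$ a densely defined self-adjoint linear operator. Let $\psi\in\operatorname{dom}(\hat H)\setminus\{0\}$ (not necessarily normalized) and let \[ d=\frac{2}{\|\psi\|}\big[\hat H\psi-E(\psi)\psi\big] \] be the $L^2$ gradient of $E$ on the unit sphere at $\psi/\|\psi\|$. Assume $d\neq0$ and $d\in\operatorname{dom}(\hat H)$. Then the optimal step size \[ \eta^*=\operatorname{argmin}_{\eta>0}E(\psi-\eta d) \] is given by \[ \eta^*=\frac{\|\psi\|}{E(d)-E(\psi)+\sqrt{(E(d)-E(\psi))^2+\|d\|^2}}. \]
   Context: For $\phi\in\operatorname{dom}(\hat H)\setminus\{0\}$ the energy (Rayleigh quotient) is $E(\phi)=\langle\phi,\hat H\phi\rangle/\langle\phi,\phi\rangle$, and $\|\cdot\|$ is the norm of $\mathcal H$. *)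

theory Defs
  imports "HOL-Analysis.Analysis"
begin

text \<open>A (possibly unbounded) linear operator T with domain D on a real Hilbert space
  ('a :: {real_inner, complete_space}) is modelled as a function together with its domain.\<close>

definition linear_operator_on :: "'a::real_vector set \<Rightarrow> ('a \<Rightarrow> 'a) \<Rightarrow> bool" where
  "linear_operator_on D T \<longleftrightarrow> subspace D \<and>
     (\<forall>x\<in>D. \<forall>y\<in>D. T (x + y) = T x + T y) \<and> (\<forall>c. \<forall>x\<in>D. T (c *\<^sub>R x) = c *\<^sub>R T x)"

definition densely_defined :: "'a::real_normed_vector set \<Rightarrow> bool" where
  "densely_defined D \<longleftrightarrow> closure D = UNIV"

definition adjoint_domain :: "'a::real_inner set \<Rightarrow> ('a \<Rightarrow> 'a) \<Rightarrow> 'a set" where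
  "adjoint_domain D T = {y. \<exists>z. \<forall>x\<in>D. inner (T x) y = inner x z}"

text \<open>Self-adjoint: symmetric on D and dom(T^*) = D (then T^* = T on D).\<close>
definition self_adjoint_op :: "'a::real_inner set \<Rightarrow> ('a \<Rightarrow> 'a) \<Rightarrow> bool" where
  "self_adjoint_op D T \<longleftrightarrow>
     (\<forall>x\<in>D. \<forall>y\<in>D. inner (T x) y = inner x (T y)) \<and> adjoint_domain D T = D"

definition energy :: "('a::real_inner \<Rightarrow> 'a) \<Rightarrow> 'a \<Rightarrow> real" where
  "energy T \<phi> = inner \<phi> (T \<phi>) / inner \<phi> \<phi>"

end

theory Submission
  imports Defs
begin

lemma alg:
  fixes n \<delta> a b \<eta> :: real
  assumes n: "n > 0" and dl: "\<delta> > 0"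
  defines "c \<equiv> b - a"
  defines "s \<equiv> sqrt (c\<^sup>2 + \<delta>)"
  defines "K \<equiv> c + s"
  shows "K > 0" and
   "(a * n\<^sup>2 - \<eta> * n * \<delta> + \<eta>\<^sup>2 * (b * \<delta>)) / (n\<^sup>2 + \<eta>\<^sup>2 * \<delta>)
     = a + (c - s)/2 + \<delta> * (K/2) * (\<eta> - n/K)\<^sup>2 / (n\<^sup>2 + \<eta>\<^sup>2 * \<delta>)"
proof -
  have s2: "s\<^sup>2 = c\<^sup>2 + \<delta>" unfolding s_def using dl by simp
  have "sqrt (c\<^sup>2) < sqrt (c\<^sup>2 + \<delta>)" using dl by (intro real_sqrt_less_mono) simp
  hence "\<bar>c\<bar> < s" unfolding s_def by simp
  thus Kp: "K > 0" unfolding K_def by linarith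
  have den: "n\<^sup>2 + \<eta>\<^sup>2 * \<delta> > 0" using n dl by (simp add: add_pos_nonneg)
  have dK: "\<delta> = (s - c) * K" unfolding K_def using s2 by (simp add: algebra_simps power2_eq_square)
  have sq: "(\<eta> - n/K)\<^sup>2 = (K*\<eta> - n)\<^sup>2 / K\<^sup>2" using Kp by (simp add: power_divide[symmetric] diff_divide_distrib)
  have b: "b = c + a" unfolding c_def by simp
  have key: "2*K*(a * n\<^sup>2 - \<eta> * n * \<delta> + \<eta>\<^sup>2 * (b * \<delta>)) = (2*K*a + K*(c - s)) * (n\<^sup>2 + \<eta>\<^sup>2 * \<delta>) + \<delta> * (K*\<eta> - n)\<^sup>2"
    unfolding dK b K_def by (simp add: algebra_simps power2_eq_square)
  have "\<delta> * (K/2) * (\<eta> - n/K)\<^sup>2 = \<delta> * (K*\<eta> - n)\<^sup>2 / (2*K)" using Kp unfolding sq by (simp add: power2_eq_square)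
  also have "\<dots> = (a * n\<^sup>2 - \<eta> * n * \<delta> + \<eta>\<^sup>2 * (b * \<delta>)) - (a + (c - s)/2) * (n\<^sup>2 + \<eta>\<^sup>2 * \<delta>)"
    using key Kp by (simp add: field_simps)
  finally have F: "\<delta> * (K/2) * (\<eta> - n/K)\<^sup>2 = (a * n\<^sup>2 - \<eta> * n * \<delta> + \<eta>\<^sup>2 * (b * \<delta>)) - (a + (c - s)/2) * (n\<^sup>2 + \<eta>\<^sup>2 * \<delta>)" .
  have X: "(a * n\<^sup>2 - \<eta> * n * \<delta> + \<eta>\<^sup>2 * (b * \<delta>)) = (a + (c - s)/2) * (n\<^sup>2 + \<eta>\<^sup>2 * \<delta>) + \<delta> * (K/2) * (\<eta> - n/K)\<^sup>2" using F by linarith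
  show "(a * n\<^sup>2 - \<eta> * n * \<delta> + \<eta>\<^sup>2 * (b * \<delta>)) / (n\<^sup>2 + \<eta>\<^sup>2 * \<delta>)
     = a + (c - s)/2 + \<delta> * (K/2) * (\<eta> - n/K)\<^sup>2 / (n\<^sup>2 + \<eta>\<^sup>2 * \<delta>)"
    unfolding X using den by (simp add: add_divide_distrib)
qed

theorem mainTheorem3:
  fixes D :: "'a::{real_inner, complete_space} set"
    and H :: "'a \<Rightarrow> 'a"
    and \<psi> d :: 'a
  assumes "linear_operator_on D H"
    and "densely_defined D"
    and "self_adjoint_op D H"
    and "\<psi> \<in> D" and "\<psi> \<noteq> 0"
    and "d = (2 / norm \<psi>) *\<^sub>R (H \<psi> - energy H \<psi> *\<^sub>R \<psi>)"
    and "d \<noteq> 0" and "d \<in> D"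
  shows "{\<eta>::real. \<eta> > 0 \<and> (\<forall>\<eta>'>0. energy H (\<psi> - \<eta> *\<^sub>R d) \<le> energy H (\<psi> - \<eta>' *\<^sub>R d))}
         = {norm \<psi> / (energy H d - energy H \<psi>
              + sqrt ((energy H d - energy H \<psi>)\<^sup>2 + (norm d)\<^sup>2))}"
proof -
  note lin = assms(1)[unfolded linear_operator_on_def]
  have sym: "inner (H \<psi>) d = inner \<psi> (H d)"
    using assms(3,4,8) unfolding self_adjoint_op_def by blast
  have Hlin: "H (\<psi> - \<eta> *\<^sub>R d) = H \<psi> - \<eta> *\<^sub>R H d" for \<eta>
  proof -
    have "(- \<eta>) *\<^sub>R d \<in> D" using lin assms(8) subspace_scale by blast
    hence "H (\<psi> + (- \<eta>) *\<^sub>R d) = H \<psi> + H ((- \<eta>) *\<^sub>R d)" using lin assms(4) by blast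
    also have "H ((- \<eta>) *\<^sub>R d) = (- \<eta>) *\<^sub>R H d" using lin assms(8) by blast
    finally show ?thesis by simp
  qed
  define n where "n = norm \<psi>"
  define a where "a = energy H \<psi>"
  define b where "b = energy H d"
  define \<delta> where "\<delta> = inner d d"
  have n: "n > 0" using assms(5) n_def by simp
  have dl: "\<delta> > 0" using assms(7) \<delta>_def by simp
  have N2: "inner \<psi> \<psi> = n\<^sup>2" unfolding n_def by (simp add: power2_norm_eq_inner)
  have A: "inner \<psi> (H \<psi>) = a * n\<^sup>2" unfolding a_def energy_def N2 using n by simp
  have C: "inner d (H d) = b * \<delta>" unfolding b_def energy_def \<delta>_def[symmetric] using dl by simp
  have dd: "d = (2 / n) *\<^sub>R (H \<psi> - a *\<^sub>R \<psi>)" using assms(6) n_def a_def by simp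
  have pd: "inner \<psi> d = 0" unfolding dd
    by (simp add: inner_diff_right A N2 inner_commute[of \<psi> "H \<psi>"])
  have "\<delta> = (2/n) * inner (H \<psi>) d"
    unfolding \<delta>_def by (subst (1) dd) (simp add: inner_diff_left pd)
  hence B: "inner \<psi> (H d) = n * \<delta> / 2" using sym n by (simp add: field_simps)
  have E: "energy H (\<psi> - \<eta> *\<^sub>R d) = (a * n\<^sup>2 - \<eta> * n * \<delta> + \<eta>\<^sup>2 * (b * \<delta>)) / (n\<^sup>2 + \<eta>\<^sup>2 * \<delta>)" for \<eta>
  proof -
    have 1: "inner (\<psi> - \<eta> *\<^sub>R d) (H \<psi> - \<eta> *\<^sub>R H d) = a * n\<^sup>2 - \<eta> * n * \<delta> + \<eta>\<^sup>2 * (b * \<delta>)"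
      by (simp add: inner_diff_left inner_diff_right A B C sym inner_commute[of d "H \<psi>"] power2_eq_square algebra_simps)
    have 2: "inner (\<psi> - \<eta> *\<^sub>R d) (\<psi> - \<eta> *\<^sub>R d) = n\<^sup>2 + \<eta>\<^sup>2 * \<delta>"
      by (simp add: inner_diff_left inner_diff_right N2 pd inner_commute[of d \<psi>] \<delta>_def[symmetric] power2_eq_square algebra_simps)
    show ?thesis unfolding energy_def Hlin 1 2 ..
  qed
  define c where "c = b - a"
  define s where "s = sqrt (c\<^sup>2 + \<delta>)"
  define K where "K = c + s"
  have Kp: "K > 0" using alg(1)[OF n dl] unfolding K_def s_def c_def .
  define m where "m = a + (c - s)/2"
  define e where "e = n / K"
  have F: "energy H (\<psi> - \<eta> *\<^sub>R d) = m + \<delta> * (K/2) * (\<eta> - e)\<^sup>2 / (n\<^sup>2 + \<eta>\<^sup>2 * \<delta>)" for \<eta>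
    unfolding E alg(2)[OF n dl] m_def e_def K_def s_def c_def ..
  have ep: "e > 0" unfolding e_def using n Kp by simp
  have den: "n\<^sup>2 + \<eta>\<^sup>2 * \<delta> > 0" for \<eta> using n dl by (simp add: add_pos_nonneg)
  have G0: "\<delta> * (K/2) * (\<eta> - e)\<^sup>2 / (n\<^sup>2 + \<eta>\<^sup>2 * \<delta>) \<ge> 0" for \<eta>
    using den[of \<eta>] dl Kp by simp
  have Gpos: "\<eta> \<noteq> e \<Longrightarrow> \<delta> * (K/2) * (\<eta> - e)\<^sup>2 / (n\<^sup>2 + \<eta>\<^sup>2 * \<delta>) > 0" for \<eta>
    using den[of \<eta>] dl Kp by simp
  have target: "norm \<psi> / (energy H d - energy H \<psi> + sqrt ((energy H d - energy H \<psi>)\<^sup>2 + (norm d)\<^sup>2)) = e"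
    unfolding e_def K_def s_def c_def b_def[symmetric] a_def[symmetric] n_def[symmetric] \<delta>_def
    by (simp add: power2_norm_eq_inner)
  show ?thesis unfolding target
  proof (intro set_eqI iffI)
    fix x assume "x \<in> {\<eta>::real. \<eta> > 0 \<and> (\<forall>\<eta>'>0. energy H (\<psi> - \<eta> *\<^sub>R d) \<le> energy H (\<psi> - \<eta>' *\<^sub>R d))}"
    hence "energy H (\<psi> - x *\<^sub>R d) \<le> energy H (\<psi> - e *\<^sub>R d)" using ep by auto
    hence "\<not> x \<noteq> e" unfolding F using Gpos[of x] by force
    thus "x \<in> {e}" by simp
  next
    fix x assume "x \<in> {e}"
    thus "x \<in> {\<eta>::real. \<eta> > 0 \<and> (\<forall>\<eta>'>0. energy H (\<psi> - \<eta> *\<^sub>R d) \<le> energy H (\<psi> - \<eta>' *\<^sub>R d))}"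
      using ep unfolding F using G0 by simp
  qed
qed

end
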